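(* Let $G_3$ be the graph with vertices $v_1,\dots,v_8$ and edges $a_1=v_1v_2$, $a_2=v_2v_3$, $a_3=v_3v_4$, $a_4=v_4v_5$, $a_5=v_1v_5$, $a_6=v_1v_8$, $a_7=v_2v_6$, $a_8=v_3v_6$, $a_9=v_4v_7$, $a_{10}=v_5v_8$, $a_{11}=v_6v_7$, $a_{12}=v_7v_8$. Let $\gamma_1=e_1+e_3+e_{10}+e_{11}$, $\gamma_2=e_2+e_4+e_6+e_{11}$, $\gamma_3=e_3+e_5+e_7+e_{12}$, $\gamma_4=e_2+e_5+e_6+e_7+e_8+2e_9+e_{10}$, $\gamma_5=e_2+e_3+e_5+e_6+e_7+e_9+e_{10}+e_{11}$, $\gamma_6=e_1+e_4+e_8+e_{12}$, $\gamma_7=e_2+e_4+e_5+e_6+e_7+e_8+e_9+e_{12}$, $\gamma_8=e_1+e_8+e_9+e_{10}$. Then any $\gamma\in S(G_3)$ can be uniquely written in one of the following five types, with $l_1,\dots,l_5\in\mathbb{N}$: $T_a$: $l_1\gamma_1+l_2\gamma_2+l_3\gamma_3+l_4\gamma_4+l_5\gamma_5$; $T_b$: $\gamma_8+l_1\gamma_1+l_2\gamma_2+l_3\gamma_3+l_4\gamma_4+l_5\gamma_8$; $T_{c_1}$: $\gamma_6+l_1\gamma_1+l_2\gamma_2+l_3\gamma_3+l_4\gamma_6+l_5\gamma_8$; $T_{c_2}$: $\gamma_4+\gamma_6+l_1\gamma_2+l_2\gamma_3+l_3\gamma_4+l_4\gamma_6+l_5\gamma_8$; $T_{c_3}$: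 $\gamma_7+l_1\gamma_2+l_2\gamma_3+l_3\gamma_4+l_4\gamma_6+l_5\gamma_7$.
   Context: For a finite graph $G$ with edges $a_1,\dots,a_n$, a magic labelling is an assignment of nonnegative integer labels $\alpha_i$ to the edges $a_i$ such that for every vertex $v$ the sum of the labels of the edges incident to $v$ equals the same number $s$ (the magic sum). A labelling is identified with $(\alpha_1,\dots,\alpha_n)\in\mathbb{N}^n$, and $S(G)$ is the set of all magic labellings. $e_i$ is the $i$-th unit vector of $\mathbb{R}^{12}$, $\mathbb{N}=\{0,1,2,\dots\}$. *)

theory Defs
  imports Main
begin

text \<open>Labellings of the 12 edges of G3 are modelled as functions nat => nat
  indexed by 1..12 and vanishing outside {1..12} (i.e. elements of N^12).
  Vertices are 1..8.\<close>

definition G3_edges :: "(nat \<times> nat) list" where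
  "G3_edges = [(1,2), (2,3), (3,4), (4,5), (1,5), (1,8), (2,6), (3,6),
               (4,7), (5,8), (6,7), (7,8)]"

definition G3_edge :: "nat \<Rightarrow> nat \<times> nat" where
  "G3_edge i = G3_edges ! (i - 1)"

definition incident :: "nat \<Rightarrow> nat \<Rightarrow> bool" where
  "incident v i \<longleftrightarrow> v = fst (G3_edge i) \<or> v = snd (G3_edge i)"

definition magic_labelling_G3 :: "(nat \<Rightarrow> nat) \<Rightarrow> bool" where
  "magic_labelling_G3 \<alpha> \<longleftrightarrow>
     (\<forall>i. i \<notin> {1..12} \<longrightarrow> \<alpha> i = 0) \<and>
     (\<exists>s. \<forall>v\<in>{1..8}. (\<Sum>i\<in>{i\<in>{1..12}. incident v i}. \<alpha> i) = s)"

definition S_G3 :: "(nat \<Rightarrow> nat) set" where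
  "S_G3 = {\<alpha>. magic_labelling_G3 \<alpha>}"

definition e :: "nat \<Rightarrow> nat \<Rightarrow> nat" where
  "e i = (\<lambda>j. if j = i then 1 else 0)"

definition gamma :: "nat \<Rightarrow> nat \<Rightarrow> nat" where
  "gamma k = [
      (\<lambda>j. e 1 j + e 3 j + e 10 j + e 11 j),
      (\<lambda>j. e 2 j + e 4 j + e 6 j + e 11 j),
      (\<lambda>j. e 3 j + e 5 j + e 7 j + e 12 j),
      (\<lambda>j. e 2 j + e 5 j + e 6 j + e 7 j + e 8 j + 2 * e 9 j + e 10 j),
      (\<lambda>j. e 2 j + e 3 j + e 5 j + e 6 j + e 7 j + e 9 j + e 10 j + e 11 j),
      (\<lambda>j. e 1 j + e 4 j + e 8 j + e 12 j),
      (\<lambda>j. e 2 j + e 4 j + e 5 j + e 6 j + e 7 j + e 8 j + e 9 j + e 12 j),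
      (\<lambda>j. e 1 j + e 8 j + e 9 j + e 10 j)] ! (k - 1)"

text \<open>gamma k is only used for k in 1..8.\<close>

datatype rtype = Ta | Tb | Tc1 | Tc2 | Tc3

fun repr :: "rtype \<Rightarrow> nat \<Rightarrow> nat \<Rightarrow> nat \<Rightarrow> nat \<Rightarrow> nat \<Rightarrow> nat \<Rightarrow> nat" where
  "repr Ta l1 l2 l3 l4 l5 = (\<lambda>j. l1 * gamma 1 j + l2 * gamma 2 j + l3 * gamma 3 j
       + l4 * gamma 4 j + l5 * gamma 5 j)"
| "repr Tb l1 l2 l3 l4 l5 = (\<lambda>j. gamma 8 j + l1 * gamma 1 j + l2 * gamma 2 j
       + l3 * gamma 3 j + l4 * gamma 4 j + l5 * gamma 8 j)"
| "repr Tc1 l1 l2 l3 l4 l5 = (\<lambda>j. gamma 6 j + l1 * gamma 1 j + l2 * gamma 2 j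
       + l3 * gamma 3 j + l4 * gamma 6 j + l5 * gamma 8 j)"
| "repr Tc2 l1 l2 l3 l4 l5 = (\<lambda>j. gamma 4 j + gamma 6 j + l1 * gamma 2 j
       + l2 * gamma 3 j + l3 * gamma 4 j + l4 * gamma 6 j + l5 * gamma 8 j)"
| "repr Tc3 l1 l2 l3 l4 l5 = (\<lambda>j. gamma 7 j + l1 * gamma 2 j + l2 * gamma 3 j
       + l3 * gamma 4 j + l4 * gamma 6 j + l5 * gamma 7 j)"

end

theory Submission
  imports Defs
begin

lemma filt: "{i\<in>{1..12::nat}. P i} = set (filter P [1..<13])"
  by auto

lemma vsets:
  "{i\<in>{1..12}. incident 1 i} = {1,5,6}"
  "{i\<in>{1..12}. incident 2 i} = {1,2,7}"
  "{i\<in>{1..12}. incident 3 i} = {2,3,8}"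
  "{i\<in>{1..12}. incident 4 i} = {3,4,9}"
  "{i\<in>{1..12}. incident 5 i} = {4,5,10}"
  "{i\<in>{1..12}. incident 6 i} = {7,8,11}"
  "{i\<in>{1..12}. incident 7 i} = {9,11,12}"
  "{i\<in>{1..12}. incident 8 i} = {6,10,12}"
  unfolding filt by (auto simp: incident_def G3_edge_def G3_edges_def upt_rec)

lemma magic_eqs:
  assumes "\<gamma> \<in> S_G3"
  shows "\<And>i. i \<notin> {1..12} \<Longrightarrow> \<gamma> i = 0"
    and "\<exists>s. \<gamma> 1 + \<gamma> 5 + \<gamma> 6 = s \<and> \<gamma> 1 + \<gamma> 2 + \<gamma> 7 = s \<and>
       \<gamma> 2 + \<gamma> 3 + \<gamma> 8 = s \<and> \<gamma> 3 + \<gamma> 4 + \<gamma> 9 = s \<and>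
       \<gamma> 4 + \<gamma> 5 + \<gamma> 10 = s \<and> \<gamma> 7 + \<gamma> 8 + \<gamma> 11 = s \<and>
       \<gamma> 9 + \<gamma> 11 + \<gamma> 12 = s \<and> \<gamma> 6 + \<gamma> 10 + \<gamma> 12 = s"
proof -
  show "\<And>i. i \<notin> {1..12} \<Longrightarrow> \<gamma> i = 0" using assms by (auto simp: S_G3_def magic_labelling_G3_def)
  from assms obtain s where s: "\<forall>v\<in>{1..8}. (\<Sum>i\<in>{i\<in>{1..12}. incident v i}. \<gamma> i) = s"
    by (auto simp: S_G3_def magic_labelling_G3_def)
  show "\<exists>s. \<gamma> 1 + \<gamma> 5 + \<gamma> 6 = s \<and> \<gamma> 1 + \<gamma> 2 + \<gamma> 7 = s \<and>
       \<gamma> 2 + \<gamma> 3 + \<gamma> 8 = s \<and> \<gamma> 3 + \<gamma> 4 + \<gamma> 9 = s \<and>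
       \<gamma> 4 + \<gamma> 5 + \<gamma> 10 = s \<and> \<gamma> 7 + \<gamma> 8 + \<gamma> 11 = s \<and>
       \<gamma> 9 + \<gamma> 11 + \<gamma> 12 = s \<and> \<gamma> 6 + \<gamma> 10 + \<gamma> 12 = s"
    using s[rule_format, of 1, unfolded vsets] s[rule_format, of 2, unfolded vsets]
      s[rule_format, of 3, unfolded vsets] s[rule_format, of 4, unfolded vsets]
      s[rule_format, of 5, unfolded vsets] s[rule_format, of 6, unfolded vsets]
      s[rule_format, of 7, unfolded vsets] s[rule_format, of 8, unfolded vsets]
    by (simp add: add.assoc)
qed

definition decode :: "(nat \<Rightarrow> nat) \<Rightarrow> rtype \<times> nat \<times> nat \<times> nat \<times> nat \<times> nat" where
  "decode x =
    (if x 2 \<ge> x 4 + x 8 then (Ta, x 1, x 4, x 12, x 8, x 2 - x 4 - x 8)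
     else if x 3 \<ge> x 12 \<and> x 2 \<ge> x 4 \<and> x 1 + x 12 \<ge> x 3 + 1
       then (Tb, x 3 - x 12, x 4, x 12, x 2 - x 4, x 1 + x 12 - x 3 - 1)
     else if x 1 \<ge> x 8 \<and> x 8 \<ge> x 9 + 1
       then (Tc1, x 1 - x 8, x 2, x 5, x 8 - x 9 - 1, x 9)
     else if x 2 \<ge> x 11 + 1 \<and> x 4 \<ge> x 11 + 1 \<and> x 1 + x 11 \<ge> x 4
       then (Tc2, x 11, x 3, x 2 - x 11 - 1, x 4 - x 11 - 1, x 1 + x 11 - x 4)
     else (Tc3, x 11, x 3, x 10, x 1, x 2 - x 10 - x 11 - 1))"

lemma gvals:
  "gamma 1 = (\<lambda>j. if j = 1 \<or> j = 3 \<or> j = 10 \<or> j = 11 then 1 else 0)"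
  "gamma (Suc 0) = (\<lambda>j. if j = 1 \<or> j = 3 \<or> j = 10 \<or> j = 11 then 1 else 0)"
  "gamma 2 = (\<lambda>j. if j = 2 \<or> j = 4 \<or> j = 6 \<or> j = 11 then 1 else 0)"
  "gamma 3 = (\<lambda>j. if j = 3 \<or> j = 5 \<or> j = 7 \<or> j = 12 then 1 else 0)"
  "gamma 4 = (\<lambda>j. if j = 9 then 2 else if j = 2 \<or> j = 5 \<or> j = 6 \<or> j = 7 \<or> j = 8 \<or> j = 10 then 1 else 0)"
  "gamma 5 = (\<lambda>j. if j = 2 \<or> j = 3 \<or> j = 5 \<or> j = 6 \<or> j = 7 \<or> j = 9 \<or> j = 10 \<or> j = 11 then 1 else 0)"
  "gamma 6 = (\<lambda>j. if j = 1 \<or> j = 4 \<or> j = 8 \<or> j = 12 then 1 else 0)"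
  "gamma 7 = (\<lambda>j. if j = 2 \<or> j = 4 \<or> j = 5 \<or> j = 6 \<or> j = 7 \<or> j = 8 \<or> j = 9 \<or> j = 12 then 1 else 0)"
  "gamma 8 = (\<lambda>j. if j = 1 \<or> j = 8 \<or> j = 9 \<or> j = 10 then 1 else 0)"
  by (auto simp: gamma_def e_def)

lemma decode_repr: "decode (repr t l1 l2 l3 l4 l5) = (t, l1, l2, l3, l4, l5)"
  by (cases t) (simp_all add: decode_def gvals)

lemma j12: "(j::nat) \<in> {1..12} \<Longrightarrow> j = 1 \<or> j = 2 \<or> j = 3 \<or> j = 4 \<or> j = 5 \<or> j = 6 \<or> j = 7 \<or> j = 8 \<or> j = 9 \<or> j = 10 \<or> j = 11 \<or> j = 12"
  unfolding atLeastAtMost_iff by arith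

lemma case_Ta:
  fixes \<gamma> :: "nat \<Rightarrow> nat"
  assumes I: "\<gamma> 3 + \<gamma> 4 + \<gamma> 8 = \<gamma> 1 + \<gamma> 12 + \<gamma> 2"
  "\<gamma> 5 + \<gamma> 4 = \<gamma> 12 + \<gamma> 2"
  "\<gamma> 6 = \<gamma> 2"
  "\<gamma> 7 + \<gamma> 4 = \<gamma> 12 + \<gamma> 2"
  "\<gamma> 9 + \<gamma> 4 = \<gamma> 8 + \<gamma> 2"
  "\<gamma> 10 + \<gamma> 4 = \<gamma> 1 + \<gamma> 2"
  "\<gamma> 11 + \<gamma> 8 = \<gamma> 1 + \<gamma> 2"
  and j: "j \<in> {1..12}"
  and c: "\<gamma> 2 \<ge> \<gamma> 4 + \<gamma> 8"
  shows "\<gamma> j = repr Ta (\<gamma> 1) (\<gamma> 4) (\<gamma> 12) (\<gamma> 8) (\<gamma> 2 - \<gamma> 4 - \<gamma> 8) j"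
  using j12[OF j] I c by (elim disjE; simp add: gvals; linarith)

lemma case_Tb:
  fixes \<gamma> :: "nat \<Rightarrow> nat"
  assumes I: "\<gamma> 3 + \<gamma> 4 + \<gamma> 8 = \<gamma> 1 + \<gamma> 12 + \<gamma> 2"
  "\<gamma> 5 + \<gamma> 4 = \<gamma> 12 + \<gamma> 2"
  "\<gamma> 6 = \<gamma> 2"
  "\<gamma> 7 + \<gamma> 4 = \<gamma> 12 + \<gamma> 2"
  "\<gamma> 9 + \<gamma> 4 = \<gamma> 8 + \<gamma> 2"
  "\<gamma> 10 + \<gamma> 4 = \<gamma> 1 + \<gamma> 2"
  "\<gamma> 11 + \<gamma> 8 = \<gamma> 1 + \<gamma> 2"
  and j: "j \<in> {1..12}"
  and c: "\<gamma> 3 \<ge> \<gamma> 12 \<and> \<gamma> 2 \<ge> \<gamma> 4 \<and> \<gamma> 1 + \<gamma> 12 \<ge> \<gamma> 3 + 1"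
  shows "\<gamma> j = repr Tb (\<gamma> 3 - \<gamma> 12) (\<gamma> 4) (\<gamma> 12) (\<gamma> 2 - \<gamma> 4) (\<gamma> 1 + \<gamma> 12 - \<gamma> 3 - 1) j"
  using j12[OF j] I c by (elim disjE; simp add: gvals; linarith)

lemma case_Tc1:
  fixes \<gamma> :: "nat \<Rightarrow> nat"
  assumes I: "\<gamma> 3 + \<gamma> 4 + \<gamma> 8 = \<gamma> 1 + \<gamma> 12 + \<gamma> 2"
  "\<gamma> 5 + \<gamma> 4 = \<gamma> 12 + \<gamma> 2"
  "\<gamma> 6 = \<gamma> 2"
  "\<gamma> 7 + \<gamma> 4 = \<gamma> 12 + \<gamma> 2"
  "\<gamma> 9 + \<gamma> 4 = \<gamma> 8 + \<gamma> 2"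
  "\<gamma> 10 + \<gamma> 4 = \<gamma> 1 + \<gamma> 2"
  "\<gamma> 11 + \<gamma> 8 = \<gamma> 1 + \<gamma> 2"
  and j: "j \<in> {1..12}"
  and c: "\<gamma> 1 \<ge> \<gamma> 8 \<and> \<gamma> 8 \<ge> \<gamma> 9 + 1"
  shows "\<gamma> j = repr Tc1 (\<gamma> 1 - \<gamma> 8) (\<gamma> 2) (\<gamma> 5) (\<gamma> 8 - \<gamma> 9 - 1) (\<gamma> 9) j"
  using j12[OF j] I c by (elim disjE; simp add: gvals; linarith)

lemma case_Tc2:
  fixes \<gamma> :: "nat \<Rightarrow> nat"
  assumes I: "\<gamma> 3 + \<gamma> 4 + \<gamma> 8 = \<gamma> 1 + \<gamma> 12 + \<gamma> 2"
  "\<gamma> 5 + \<gamma> 4 = \<gamma> 12 + \<gamma> 2"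
  "\<gamma> 6 = \<gamma> 2"
  "\<gamma> 7 + \<gamma> 4 = \<gamma> 12 + \<gamma> 2"
  "\<gamma> 9 + \<gamma> 4 = \<gamma> 8 + \<gamma> 2"
  "\<gamma> 10 + \<gamma> 4 = \<gamma> 1 + \<gamma> 2"
  "\<gamma> 11 + \<gamma> 8 = \<gamma> 1 + \<gamma> 2"
  and j: "j \<in> {1..12}"
  and c: "\<gamma> 2 \<ge> \<gamma> 11 + 1 \<and> \<gamma> 4 \<ge> \<gamma> 11 + 1 \<and> \<gamma> 1 + \<gamma> 11 \<ge> \<gamma> 4"
  shows "\<gamma> j = repr Tc2 (\<gamma> 11) (\<gamma> 3) (\<gamma> 2 - \<gamma> 11 - 1) (\<gamma> 4 - \<gamma> 11 - 1) (\<gamma> 1 + \<gamma> 11 - \<gamma> 4) j"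
  using j12[OF j] I c by (elim disjE; simp add: gvals; linarith)

lemma case_Tc3:
  fixes \<gamma> :: "nat \<Rightarrow> nat"
  assumes I: "\<gamma> 3 + \<gamma> 4 + \<gamma> 8 = \<gamma> 1 + \<gamma> 12 + \<gamma> 2"
  "\<gamma> 5 + \<gamma> 4 = \<gamma> 12 + \<gamma> 2"
  "\<gamma> 6 = \<gamma> 2"
  "\<gamma> 7 + \<gamma> 4 = \<gamma> 12 + \<gamma> 2"
  "\<gamma> 9 + \<gamma> 4 = \<gamma> 8 + \<gamma> 2"
  "\<gamma> 10 + \<gamma> 4 = \<gamma> 1 + \<gamma> 2"
  "\<gamma> 11 + \<gamma> 8 = \<gamma> 1 + \<gamma> 2"
  and j: "j \<in> {1..12}"
  and c: "\<gamma> 2 \<ge> \<gamma> 10 + \<gamma> 11 + 1"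
  shows "\<gamma> j = repr Tc3 (\<gamma> 11) (\<gamma> 3) (\<gamma> 10) (\<gamma> 1) (\<gamma> 2 - \<gamma> 10 - \<gamma> 11 - 1) j"
  using j12[OF j] I c by (elim disjE; simp add: gvals; linarith)

lemma tc3_cond:
  fixes \<gamma> :: "nat \<Rightarrow> nat"
  assumes I: "\<gamma> 3 + \<gamma> 4 + \<gamma> 8 = \<gamma> 1 + \<gamma> 12 + \<gamma> 2"
  "\<gamma> 5 + \<gamma> 4 = \<gamma> 12 + \<gamma> 2"
  "\<gamma> 6 = \<gamma> 2"
  "\<gamma> 7 + \<gamma> 4 = \<gamma> 12 + \<gamma> 2"
  "\<gamma> 9 + \<gamma> 4 = \<gamma> 8 + \<gamma> 2"
  "\<gamma> 10 + \<gamma> 4 = \<gamma> 1 + \<gamma> 2"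
  "\<gamma> 11 + \<gamma> 8 = \<gamma> 1 + \<gamma> 2"
  and c: "\<not> \<gamma> 2 \<ge> \<gamma> 4 + \<gamma> 8" "\<not> (\<gamma> 3 \<ge> \<gamma> 12 \<and> \<gamma> 2 \<ge> \<gamma> 4 \<and> \<gamma> 1 + \<gamma> 12 \<ge> \<gamma> 3 + 1)" "\<not> (\<gamma> 1 \<ge> \<gamma> 8 \<and> \<gamma> 8 \<ge> \<gamma> 9 + 1)" "\<not> (\<gamma> 2 \<ge> \<gamma> 11 + 1 \<and> \<gamma> 4 \<ge> \<gamma> 11 + 1 \<and> \<gamma> 1 + \<gamma> 11 \<ge> \<gamma> 4)"
  shows "\<gamma> 2 \<ge> \<gamma> 10 + \<gamma> 11 + 1"
  using I c unfolding not_le de_Morgan_conj by (elim disjE; linarith)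

lemma out_vals: "j \<notin> {1..12} \<Longrightarrow> repr t l1 l2 l3 l4 l5 j = 0"
  by (cases t) (auto simp: gvals)

lemma repr_decode:
  assumes "\<gamma> \<in> S_G3"
  shows "case decode \<gamma> of (t, l1, l2, l3, l4, l5) \<Rightarrow> \<gamma> = repr t l1 l2 l3 l4 l5"
proof -
  note z = magic_eqs(1)[OF assms]
  obtain s where
    e1: "\<gamma> 1 + \<gamma> 5 + \<gamma> 6 = s" and e2: "\<gamma> 1 + \<gamma> 2 + \<gamma> 7 = s" and
    e3: "\<gamma> 2 + \<gamma> 3 + \<gamma> 8 = s" and e4: "\<gamma> 3 + \<gamma> 4 + \<gamma> 9 = s" and
    e5: "\<gamma> 4 + \<gamma> 5 + \<gamma> 10 = s" and e6: "\<gamma> 7 + \<gamma> 8 + \<gamma> 11 = s" and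
    e7: "\<gamma> 9 + \<gamma> 11 + \<gamma> 12 = s" and e8: "\<gamma> 6 + \<gamma> 10 + \<gamma> 12 = s"
    using magic_eqs(2)[OF assms] by blast
  have i3: "\<gamma> 3 + \<gamma> 4 + \<gamma> 8 = \<gamma> 1 + \<gamma> 12 + \<gamma> 2" using e1 e2 e3 e4 e5 e6 e7 e8 by linarith
  have i5: "\<gamma> 5 + \<gamma> 4 = \<gamma> 12 + \<gamma> 2" using e1 e2 e3 e4 e5 e6 e7 e8 by linarith
  have i6: "\<gamma> 6 = \<gamma> 2" using e1 e2 e3 e4 e5 e6 e7 e8 by linarith
  have i7: "\<gamma> 7 + \<gamma> 4 = \<gamma> 12 + \<gamma> 2" using e1 e2 e3 e4 e5 e6 e7 e8 by linarith
  have i9: "\<gamma> 9 + \<gamma> 4 = \<gamma> 8 + \<gamma> 2" using e1 e2 e3 e4 e5 e6 e7 e8 by linarith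
  have i10: "\<gamma> 10 + \<gamma> 4 = \<gamma> 1 + \<gamma> 2" using e1 e2 e3 e4 e5 e6 e7 e8 by linarith
  have i11: "\<gamma> 11 + \<gamma> 8 = \<gamma> 1 + \<gamma> 2" using e1 e2 e3 e4 e5 e6 e7 e8 by linarith
  note I = i3 i5 i6 i7 i9 i10 i11
  have ext': "\<gamma> = f" if "\<And>j. j \<in> {1..12} \<Longrightarrow> \<gamma> j = f j" "\<And>j. j \<notin> {1..12} \<Longrightarrow> f j = 0" for f
  proof
    fix j show "\<gamma> j = f j" using that z by (cases "j \<in> {1..12}") auto
  qed
  show ?thesis
  proof (cases "\<gamma> 2 \<ge> \<gamma> 4 + \<gamma> 8")
    case c1: True
    then show ?thesis unfolding decode_def
      by (simp only: if_True simp_thms split) (rule ext'[OF case_Ta[OF I _ c1] out_vals])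
  next
    case n1: False
    show ?thesis
    proof (cases "\<gamma> 3 \<ge> \<gamma> 12 \<and> \<gamma> 2 \<ge> \<gamma> 4 \<and> \<gamma> 1 + \<gamma> 12 \<ge> \<gamma> 3 + 1")
      case c2: True
      then show ?thesis unfolding decode_def using n1
        by (simp only: if_True if_False simp_thms split) (rule ext'[OF case_Tb[OF I _ c2] out_vals])
    next
      case n2: False
      show ?thesis
      proof (cases "\<gamma> 1 \<ge> \<gamma> 8 \<and> \<gamma> 8 \<ge> \<gamma> 9 + 1")
        case c3: True
        then show ?thesis unfolding decode_def using n1 n2
          by (simp only: if_True if_False simp_thms split) (rule ext'[OF case_Tc1[OF I _ c3] out_vals])
      next
        case n3: False
        show ?thesis
        proof (cases "\<gamma> 2 \<ge> \<gamma> 11 + 1 \<and> \<gamma> 4 \<ge> \<gamma> 11 + 1 \<and> \<gamma> 1 + \<gamma> 11 \<ge> \<gamma> 4")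
          case c4: True
          then show ?thesis unfolding decode_def using n1 n2 n3
            by (simp only: if_True if_False simp_thms split) (rule ext'[OF case_Tc2[OF I _ c4] out_vals])
        next
          case n4: False
          have c5: "\<gamma> 2 \<ge> \<gamma> 10 + \<gamma> 11 + 1" by (rule tc3_cond[OF I n1 n2 n3 n4])
          show ?thesis unfolding decode_def using n1 n2 n3 n4
            by (simp only: if_True if_False simp_thms split) (rule ext'[OF case_Tc3[OF I _ c5] out_vals])
        qed
      qed
    qed
  qed
qed

theorem mainTheorem7:
  assumes "\<gamma> \<in> S_G3"
  shows "\<exists>!(t, l1, l2, l3, l4, l5). \<gamma> = repr t l1 l2 l3 l4 l5"
proof (rule ex1I[of _ "decode \<gamma>"])
  show "case decode \<gamma> of (t, l1, l2, l3, l4, l5) \<Rightarrow> \<gamma> = repr t l1 l2 l3 l4 l5"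
    using repr_decode[OF assms] .
next
  fix y assume "case y of (t, l1, l2, l3, l4, l5) \<Rightarrow> \<gamma> = repr t l1 l2 l3 l4 l5"
  then show "y = decode \<gamma>" by (auto simp: decode_repr split: prod.splits)
qed

end
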